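(* Let $\mathbb{F}$ be any field. There exists a non-zero polynomial $Q \in \mathbb{F}[x_{1,1, 1}, \ldots, x_{n,n, n}]$ of degree at most $n^4$ such that $Q(\tau)=0$ for every three-dimensional tensor $\tau:[n]\times [n] \times [n] \to \mathbb{F}$ of rank at most $n^2/300$.
   Context: The rank of a tensor $\tau:[n]^3\to\mathbb{F}$ is the least $r$ such that $\tau=\sum_{i=1}^r u_i\otimes v_i\otimes w_i$ with $u_i,v_i,w_i\in\mathbb{F}^n$. $Q(\tau)$ denotes evaluation at $x_{i,j,k}=\tau(i,j,k)$. *)

theory Defs
  imports Complex_Main "HOL-Library.Poly_Mapping"
begin

text \<open>Tensors on [n]^3 (indices 0..n-1) are functions on nat triples; only values
on {0..<n}^3 matter. Multivariate polynomials in variables x_{i,j,k} are represented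
as finitely supported maps from monomials (finitely supported exponent maps on the
variable triples) to coefficients.\<close>

type_synonym 'a tpoly = "((nat \<times> nat \<times> nat) \<Rightarrow>\<^sub>0 nat) \<Rightarrow>\<^sub>0 'a"

definition cube :: "nat \<Rightarrow> (nat \<times> nat \<times> nat) set" where
  "cube n = {0..<n} \<times> {0..<n} \<times> {0..<n}"

definition tpoly_in_vars :: "nat \<Rightarrow> 'a::zero tpoly \<Rightarrow> bool" where
  "tpoly_in_vars n Q \<longleftrightarrow> (\<forall>m \<in> Poly_Mapping.keys Q. Poly_Mapping.keys m \<subseteq> cube n)"

definition monomial_degree :: "((nat \<times> nat \<times> nat) \<Rightarrow>\<^sub>0 nat) \<Rightarrow> nat" where
  "monomial_degree m = (\<Sum>x\<in>Poly_Mapping.keys m. Poly_Mapping.lookup m x)"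

definition tpoly_degree :: "'a::zero tpoly \<Rightarrow> nat" where
  "tpoly_degree Q = Max (insert 0 (monomial_degree ` Poly_Mapping.keys Q))"

definition tpoly_eval :: "'a::comm_ring_1 tpoly \<Rightarrow> (nat \<times> nat \<times> nat \<Rightarrow> 'a) \<Rightarrow> 'a" where
  "tpoly_eval Q \<tau> = (\<Sum>m\<in>Poly_Mapping.keys Q. Poly_Mapping.lookup Q m * (\<Prod>x\<in>Poly_Mapping.keys m. \<tau> x ^ Poly_Mapping.lookup m x))"

definition has_rank_decomp :: "nat \<Rightarrow> (nat \<times> nat \<times> nat \<Rightarrow> 'a::comm_ring_1) \<Rightarrow> nat \<Rightarrow> bool" where
  "has_rank_decomp n \<tau> r \<longleftrightarrow>
     (\<exists>u v w :: nat \<Rightarrow> nat \<Rightarrow> 'a. \<forall>i<n. \<forall>j<n. \<forall>k<n.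
        \<tau> (i, j, k) = (\<Sum>l<r. u l i * v l j * w l k))"

definition tensor_rank :: "nat \<Rightarrow> (nat \<times> nat \<times> nat \<Rightarrow> 'a::comm_ring_1) \<Rightarrow> nat" where
  "tensor_rank n \<tau> = (LEAST r. has_rank_decomp n \<tau> r)"

end

theory Submission imports Defs "HOL-Library.Function_Algebras" "HOL-Library.FuncSet" begin

definition fscale :: "'a::field \<Rightarrow> ('p \<Rightarrow> 'a) \<Rightarrow> ('p \<Rightarrow> 'a)" where
  "fscale c f = (\<lambda>x. c * f x)"

interpretation fv: vector_space fscale
  by unfold_locales (auto simp: fscale_def fun_eq_iff algebra_simps)

lemma fsum_apply: "(\<Sum>v\<in>A. f v) x = (\<Sum>v\<in>A. f v x)"
  by (induction A rule: infinite_finite_induct) auto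

lemma span_mult1:
  fixes g :: "'p \<Rightarrow> 'a::field"
  assumes "\<And>b. b \<in> B \<Longrightarrow> (\<lambda>x. a x * b x) \<in> fv.span C" and "g \<in> fv.span B"
  shows "(\<lambda>x. a x * g x) \<in> fv.span C"
  using assms(2)
proof (induction rule: fv.span_induct_alt)
  case base
  then show ?case using fv.span_zero by (simp add: zero_fun_def)
next
  case (step c x y)
  have "(\<lambda>z. a z * (fscale c x + y) z) = fscale c (\<lambda>z. a z * x z) + (\<lambda>z. a z * y z)"
    by (auto simp: fscale_def fun_eq_iff algebra_simps)
  then show ?case using step assms(1) fv.span_add fv.span_scale by metis
qed

lemma span_mult:
  fixes f g :: "'p \<Rightarrow> 'a::field"
  assumes "\<And>a b. a \<in> A \<Longrightarrow> b \<in> B \<Longrightarrow> (\<lambda>x. a x * b x) \<in> fv.span C"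
    and "f \<in> fv.span A" and "g \<in> fv.span B"
  shows "(\<lambda>x. f x * g x) \<in> fv.span C"
  using assms(2)
proof (induction rule: fv.span_induct_alt)
  case base
  then show ?case using fv.span_zero by (simp add: zero_fun_def)
next
  case (step c x y)
  have "(\<lambda>z. (fscale c x + y) z * g z) = fscale c (\<lambda>z. x z * g z) + (\<lambda>z. y z * g z)"
    by (auto simp: fscale_def fun_eq_iff algebra_simps)
  moreover have "(\<lambda>z. x z * g z) \<in> fv.span C"
    using span_mult1[of B x C g] assms(1,3) step(1) by auto
  ultimately show ?case using step fv.span_add fv.span_scale by metis
qed

definition mon :: "'p set \<Rightarrow> ('p \<Rightarrow> nat) \<Rightarrow> ('p \<Rightarrow> 'a::field) \<Rightarrow> 'a" where
  "mon Y \<beta> = (\<lambda>p. \<Prod>y\<in>Y. p y ^ \<beta> y)"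

definition PS :: "'p set \<Rightarrow> nat \<Rightarrow> (('p \<Rightarrow> 'a::field) \<Rightarrow> 'a) set" where
  "PS Y d = fv.span (mon Y ` PiE Y (\<lambda>_. {..d}))"

lemma PS_mono: "d \<le> e \<Longrightarrow> PS Y d \<subseteq> PS Y e"
  unfolding PS_def
  by (intro fv.span_mono image_mono PiE_mono) auto

lemma mon_restrict: "mon Y (restrict f Y) = mon Y f"
  unfolding mon_def by (auto intro!: prod.cong)

lemma PS_mult:
  assumes "f \<in> PS Y d" "g \<in> PS Y e"
  shows "(\<lambda>x. f x * g x) \<in> PS Y (d + e)"
proof -
  have key: "(\<lambda>x. a x * b x) \<in> fv.span (mon Y ` PiE Y (\<lambda>_. {..d+e}))"
    if A: "a \<in> mon Y ` PiE Y (\<lambda>_. {..d})" "b \<in> mon Y ` PiE Y (\<lambda>_. {..e})" for a b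
  proof -
    obtain \<beta> \<gamma> where b: "\<beta> \<in> PiE Y (\<lambda>_. {..d})" "a = mon Y \<beta>" "\<gamma> \<in> PiE Y (\<lambda>_. {..e})" "b = mon Y \<gamma>"
      using A by blast
    have "(\<lambda>x. a x * b x) = mon Y (restrict (\<lambda>y. \<beta> y + \<gamma> y) Y)"
      unfolding mon_restrict b(2,4) mon_def by (simp add: fun_eq_iff power_add prod.distrib)
    moreover have "restrict (\<lambda>y. \<beta> y + \<gamma> y) Y \<in> PiE Y (\<lambda>_. {..d+e})"
    proof (rule restrict_PiE_iff[THEN iffD2], intro ballI)
      fix y assume "y \<in> Y"
      then have "\<beta> y \<le> d" "\<gamma> y \<le> e" using b(1,3) by (auto simp: PiE_iff)
      then show "\<beta> y + \<gamma> y \<in> {..d+e}" by simp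
    qed
    ultimately show ?thesis by (auto intro!: fv.span_base)
  qed
  show ?thesis unfolding PS_def
    by (rule span_mult[OF key assms[unfolded PS_def]])
qed

lemma PS_one: "(\<lambda>p. 1) \<in> PS Y d"
proof -
  have "(\<lambda>p. 1) = mon Y (restrict (\<lambda>_. 0) Y)"
    unfolding mon_restrict by (simp add: mon_def)
  moreover have "restrict (\<lambda>_. 0) Y \<in> PiE Y (\<lambda>_. {..d})" by auto
  ultimately show ?thesis unfolding PS_def by (auto intro!: fv.span_base)
qed

lemma PS_var:
  fixes Y :: "'p set"
  assumes "finite Y" "y \<in> Y" "d \<ge> 1"
  shows "(\<lambda>p::'p \<Rightarrow> 'a::field. p y) \<in> PS Y d"
proof -
  have eq: "(\<Prod>z\<in>Y. p z ^ (if z = y then 1 else 0)) = p y" for p :: "'p \<Rightarrow> 'a"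
  proof -
    have "(\<Prod>z\<in>Y. p z ^ (if z = y then 1 else 0)) = p y ^ (if y = y then 1 else 0) * (\<Prod>z\<in>Y-{y}. p z ^ (if z = y then 1 else 0))"
      by (rule prod.remove[OF assms(1,2)])
    also have "(\<Prod>z\<in>Y-{y}. p z ^ (if z = y then 1 else 0)) = 1"
      by (rule prod.neutral) auto
    finally show ?thesis by simp
  qed
  have "mon Y (\<lambda>z. if z = y then 1 else 0) = (\<lambda>p::'p \<Rightarrow> 'a. p y)"
    unfolding mon_def by (rule ext) (rule eq)
  then have "(\<lambda>p::'p \<Rightarrow> 'a::field. p y) = mon Y (restrict (\<lambda>z. if z = y then 1 else 0) Y)"
    by (simp only: mon_restrict)
  moreover have "restrict (\<lambda>z. if z = y then 1 else 0) Y \<in> PiE Y (\<lambda>_. {..d})" using assms by auto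
  ultimately show ?thesis unfolding PS_def by (auto intro!: fv.span_base)
qed

lemma PS_sum:
  assumes "\<And>i. i \<in> I \<Longrightarrow> f i \<in> PS Y d"
  shows "(\<lambda>p. \<Sum>i\<in>I. f i p) \<in> PS Y d"
proof -
  have "(\<lambda>p. \<Sum>i\<in>I. f i p) = (\<Sum>i\<in>I. f i)" by (auto simp: fsum_apply)
  then show ?thesis using assms unfolding PS_def by (auto intro!: fv.span_sum)
qed

lemma PS_power:
  assumes "f \<in> PS Y d"
  shows "(\<lambda>p. f p ^ e) \<in> PS Y (d * e)"
proof (induction e)
  case 0 then show ?case using PS_one by simp
next
  case (Suc e)
  have "(\<lambda>p. f p * f p ^ e) \<in> PS Y (d + d * e)" using PS_mult[OF assms Suc] .
  then show ?case by simp
qed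

lemma PS_prod:
  assumes "finite K" "\<And>x. x \<in> K \<Longrightarrow> f x \<in> PS Y (d x)"
  shows "(\<lambda>p. \<Prod>x\<in>K. f x p) \<in> PS Y (\<Sum>x\<in>K. d x)"
  using assms
proof (induction K rule: finite_induct)
  case empty then show ?case using PS_one by simp
next
  case (insert a K)
  have "(\<lambda>p. f a p * (\<Prod>x\<in>K. f x p)) \<in> PS Y (d a + (\<Sum>x\<in>K. d x))"
    using insert by (intro PS_mult) auto
  then show ?case using insert by simp
qed

lemma card_T: "finite Y \<Longrightarrow> card (mon Y ` PiE Y (\<lambda>_. {..d})) \<le> (d+1) ^ card Y"
proof -
  assume Y: "finite Y"
  have "card (mon Y ` PiE Y (\<lambda>_. {..d})) \<le> card (PiE Y (\<lambda>_. {..d}))"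
    by (rule card_image_le) (simp add: Y finite_PiE)
  also have "\<dots> = (d+1) ^ card Y" using Y by (simp add: card_PiE)
  finally show ?thesis .
qed

definition Yp :: "nat \<Rightarrow> nat \<Rightarrow> (nat \<times> nat \<times> nat) set" where
  "Yp R n = {..<3} \<times> {..<R} \<times> {..<n}"

definition Phi :: "nat \<Rightarrow> (nat \<times> nat \<times> nat \<Rightarrow> 'a::field) \<Rightarrow> nat \<times> nat \<times> nat \<Rightarrow> 'a" where
  "Phi R p x = (case x of (i, j, k) \<Rightarrow> \<Sum>l<R. p (0, l, i) * p (1, l, j) * p (2, l, k))"

lemma finite_Yp: "finite (Yp R n)" by (simp add: Yp_def)

lemma card_Yp: "card (Yp R n) = 3 * R * n" by (simp add: Yp_def card_cartesian_product)

lemma finite_cube: "finite (cube n)" by (simp add: cube_def)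

lemma card_cube: "card (cube n) = n ^ 3"
  by (simp add: cube_def card_cartesian_product power3_eq_cube)

lemma Phi_PS:
  assumes "x \<in> cube n"
  shows "(\<lambda>p. Phi R p x :: 'a::field) \<in> PS (Yp R n) 3"
proof -
  obtain i j k where x: "x = (i, j, k)" "i < n" "j < n" "k < n" using assms by (auto simp: cube_def)
  have "(\<lambda>p. \<Sum>l<R. p (0, l, i) * p (1, l, j) * p (2, l, k) :: 'a) \<in> PS (Yp R n) 3"
  proof (rule PS_sum)
    fix l assume l: "l \<in> {..<R}"
    have a: "(\<lambda>p. p (0::nat, l, i) :: 'a) \<in> PS (Yp R n) 1"
      by (rule PS_var) (use l x in \<open>auto simp: Yp_def\<close>)
    have b: "(\<lambda>p. p (1::nat, l, j) :: 'a) \<in> PS (Yp R n) 1"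
      by (rule PS_var) (use l x in \<open>auto simp: Yp_def\<close>)
    have c: "(\<lambda>p. p (2::nat, l, k) :: 'a) \<in> PS (Yp R n) 1"
      by (rule PS_var) (use l x in \<open>auto simp: Yp_def\<close>)
    have ab: "(\<lambda>p. p (0::nat, l, i) * p (1, l, j) :: 'a) \<in> PS (Yp R n) (1 + 1)"
      by (rule PS_mult[OF a b])
    have h: "(\<lambda>p. p (0::nat, l, i) * p (1, l, j) * p (2, l, k) :: 'a) \<in> PS (Yp R n) (1 + 1 + 1)"
      by (rule PS_mult[OF ab c])
    have eq: "(1 + 1 + 1 :: nat) = 3" by simp
    show "(\<lambda>p. p (0::nat, l, i) * p (1, l, j) * p (2, l, k) :: 'a) \<in> PS (Yp R n) 3" using h unfolding eq .
  qed
  then show ?thesis by (simp add: Phi_def x)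
qed

definition gmon :: "nat \<Rightarrow> ((nat \<times> nat \<times> nat) \<Rightarrow>\<^sub>0 nat) \<Rightarrow> (nat \<times> nat \<times> nat \<Rightarrow> 'a::field) \<Rightarrow> 'a" where
  "gmon R m = (\<lambda>p. \<Prod>x\<in>Poly_Mapping.keys m. Phi R p x ^ Poly_Mapping.lookup m x)"

lemma gmon_PS:
  assumes "Poly_Mapping.keys m \<subseteq> cube n"
  shows "(gmon R m :: _ \<Rightarrow> 'a::field) \<in> PS (Yp R n) (3 * monomial_degree m)"
proof -
  have "(\<lambda>p. \<Prod>x\<in>Poly_Mapping.keys m. Phi R p x ^ Poly_Mapping.lookup m x :: 'a)
      \<in> PS (Yp R n) (\<Sum>x\<in>Poly_Mapping.keys m. 3 * Poly_Mapping.lookup m x)"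
    by (rule PS_prod) (use assms in \<open>auto intro!: PS_power Phi_PS\<close>)
  then show ?thesis by (simp add: gmon_def monomial_degree_def sum_distrib_left)
qed

definition mk :: "nat \<Rightarrow> (nat \<times> nat \<times> nat \<Rightarrow> nat) \<Rightarrow> (nat \<times> nat \<times> nat) \<Rightarrow>\<^sub>0 nat" where
  "mk n f = Abs_poly_mapping (\<lambda>x. if x \<in> cube n then f x else 0)"

lemma lookup_mk: "Poly_Mapping.lookup (mk n f) = (\<lambda>x. if x \<in> cube n then f x else 0)"
proof -
  have "finite {x. (if x \<in> cube n then f x else 0) \<noteq> 0}"
    by (rule finite_subset[OF _ finite_cube[of n]]) (auto split: if_splits)
  then show ?thesis by (simp add: mk_def)
qed

lemma keys_mk: "Poly_Mapping.keys (mk n f) \<subseteq> cube n"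
  by (auto simp: in_keys_iff lookup_mk split: if_splits)

lemma inj_mk: "inj_on (mk n) (PiE (cube n) (\<lambda>_. {..n}))"
proof (rule inj_onI)
  fix f g assume f: "f \<in> PiE (cube n) (\<lambda>_. {..n})" and g: "g \<in> PiE (cube n) (\<lambda>_. {..n})"
    and eq: "mk n f = mk n g"
  show "f = g"
  proof (rule ext)
    fix x
    show "f x = g x"
    proof (cases "x \<in> cube n")
      case True
      then show ?thesis using arg_cong[OF eq, of "\<lambda>m. Poly_Mapping.lookup m x"] by (simp add: lookup_mk)
    next
      case False
      then show ?thesis using PiE_arb[OF f False] PiE_arb[OF g False] by simp
    qed
  qed
qed

definition Smon :: "nat \<Rightarrow> ((nat \<times> nat \<times> nat) \<Rightarrow>\<^sub>0 nat) set" where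
  "Smon n = mk n ` PiE (cube n) (\<lambda>_. {..n})"

lemma finite_Smon: "finite (Smon n)"
  by (simp add: Smon_def finite_PiE finite_cube)

lemma card_Smon: "card (Smon n) = (n + 1) ^ (n ^ 3)"
  unfolding Smon_def
  by (simp add: card_image[OF inj_mk] card_PiE finite_cube card_cube)

lemma Smon_keys: "m \<in> Smon n \<Longrightarrow> Poly_Mapping.keys m \<subseteq> cube n"
  using keys_mk by (auto simp: Smon_def)

lemma Smon_degree:
  assumes "m \<in> Smon n" shows "monomial_degree m \<le> n ^ 4"
proof -
  obtain f where f: "f \<in> PiE (cube n) (\<lambda>_. {..n})" "m = mk n f" using assms by (auto simp: Smon_def)
  have "monomial_degree m = (\<Sum>x\<in>Poly_Mapping.keys m. Poly_Mapping.lookup m x)"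
    by (simp add: monomial_degree_def)
  also have "\<dots> \<le> (\<Sum>x\<in>cube n. Poly_Mapping.lookup m x)"
    by (rule sum_mono2[OF finite_cube]) (use Smon_keys[OF assms] in auto)
  also have "\<dots> \<le> (\<Sum>x\<in>cube n. n)"
    by (rule sum_mono) (use f in \<open>auto simp: lookup_mk PiE_def Pi_def\<close>)
  also have "\<dots> = n ^ 4" by (simp add: card_cube power_def power_Suc)
  finally show ?thesis .
qed

lemma decomp_exists: "has_rank_decomp n (\<tau> :: _ \<Rightarrow> 'a::comm_ring_1) (n * n)"
  unfolding has_rank_decomp_def
proof (intro exI allI impI)
  fix i j k assume ijk: "i < n" "j < n" "k < n"
  let ?u = "\<lambda>l i. \<tau> (i, l div n, l mod n)"
  let ?v = "\<lambda>l j. if j = l div n then 1 else (0::'a)"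
  let ?w = "\<lambda>l k. if k = l mod n then 1 else (0::'a)"
  have t: "?u l i * ?v l j * ?w l k = (if l = j * n + k then \<tau> (i, j, k) else 0)" for l
  proof -
    have "(j = l div n \<and> k = l mod n) \<longleftrightarrow> l = j * n + k"
      using ijk by (metis div_mult_mod_eq add.commute mult.commute div_mult_self1 mod_mult_self2 div_less mod_less add_0 less_zeroE gr_implies_not0)
    then show ?thesis by auto
  qed
  have "j * n + k < n * n"
  proof -
    have "j * n + k < j * n + n" using ijk by simp
    also have "\<dots> = (j + 1) * n" by simp
    also have "\<dots> \<le> n * n" using ijk by (intro mult_right_mono) auto
    finally show ?thesis .
  qed
  then show "\<tau> (i, j, k) = (\<Sum>l<n * n. ?u l i * ?v l j * ?w l k)"
    unfolding t by (simp add: sum.delta')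
qed

lemma rank_params:
  fixes \<tau> :: "nat \<times> nat \<times> nat \<Rightarrow> 'a::field"
  assumes "tensor_rank n \<tau> \<le> R"
  shows "\<exists>p. \<forall>x\<in>cube n. \<tau> x = Phi R p x"
proof -
  let ?r = "tensor_rank n \<tau>"
  have "has_rank_decomp n \<tau> ?r"
    unfolding tensor_rank_def by (rule LeastI[of "has_rank_decomp n \<tau>", OF decomp_exists])
  then obtain u v w :: "nat \<Rightarrow> nat \<Rightarrow> 'a" where d:
    "\<forall>i<n. \<forall>j<n. \<forall>k<n. \<tau> (i, j, k) = (\<Sum>l<?r. u l i * v l j * w l k)"
    unfolding has_rank_decomp_def by blast
  define p where "p = (\<lambda>(t::nat, l::nat, i::nat). if l < ?r then (if t = 0 then u l i else if t = 1 then v l i else w l i) else 0)"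
  show ?thesis
  proof (intro exI ballI)
    fix x assume "x \<in> cube n"
    then obtain i j k where x: "x = (i, j, k)" "i < n" "j < n" "k < n" by (auto simp: cube_def)
    have "Phi R p x = (\<Sum>l<R. p (0, l, i) * p (1, l, j) * p (2, l, k))" by (simp add: Phi_def x)
    also have "\<dots> = (\<Sum>l<?r. p (0, l, i) * p (1, l, j) * p (2, l, k))"
      by (rule sum.mono_neutral_right) (use assms in \<open>auto simp: p_def\<close>)
    also have "\<dots> = (\<Sum>l<?r. u l i * v l j * w l k)"
      by (rule sum.cong) (auto simp: p_def)
    also have "\<dots> = \<tau> x" using d x by simp
    finally show "\<tau> x = Phi R p x" by simp
  qed
qed

lemma count_arith:
  fixes n R :: nat
  assumes "n \<ge> 1" "300 * R \<le> n ^ 2"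
  shows "(3 * n ^ 4 + 1) ^ (3 * R * n) < (n + 1) ^ (n ^ 3)"
proof -
  have "3 * n ^ 4 + 1 \<le> (n + 1) ^ 5"
  proof -
    have "(n + 1) ^ 5 = n^5 + 5*n^4 + 10*n^3 + 10*n^2 + 5*n + 1"
      by (simp add: power_def power_Suc algebra_simps numeral_eq_Suc)
    then show ?thesis by simp
  qed
  then have "(3 * n ^ 4 + 1) ^ (3 * R * n) \<le> ((n + 1) ^ 5) ^ (3 * R * n)"
    by (rule power_mono) simp
  also have "\<dots> = (n + 1) ^ (15 * R * n)" by (simp add: power_mult[symmetric] mult.assoc)
  also have "\<dots> < (n + 1) ^ (n ^ 3)"
  proof (rule power_strict_increasing)
    have "300 * (R * n) \<le> n ^ 2 * n" using assms(2) by (simp add: mult.assoc[symmetric])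
    then have "300 * (R * n) \<le> n ^ 3" by (simp add: power3_eq_cube power2_eq_square)
    moreover have "n ^ 3 \<ge> 1" using assms(1) by simp
    ultimately show "15 * R * n < n ^ 3" by linarith
  qed (use assms in auto)
  finally show ?thesis .
qed

lemma exists_relation:
  fixes n R :: nat
  assumes "n \<ge> 1" "300 * R \<le> n ^ 2"
  shows "\<exists>c :: _ \<Rightarrow> 'a::field. (\<exists>m\<in>Smon n. c m \<noteq> 0) \<and> (\<forall>p. (\<Sum>m\<in>Smon n. c m * gmon R m p) = 0)"
proof (cases "inj_on (gmon R :: _ \<Rightarrow> (_ \<Rightarrow> 'a) \<Rightarrow> 'a) (Smon n)")
  case True
  let ?G = "(gmon R :: _ \<Rightarrow> (_ \<Rightarrow> 'a) \<Rightarrow> 'a) ` Smon n"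
  let ?T = "(mon (Yp R n) :: _ \<Rightarrow> (_ \<Rightarrow> 'a) \<Rightarrow> 'a) ` PiE (Yp R n) (\<lambda>_. {..3*n^4})"
  have sub: "?G \<subseteq> fv.span ?T"
  proof
    fix g assume "g \<in> ?G"
    then obtain m where m: "m \<in> Smon n" "g = gmon R m" by auto
    have "g \<in> PS (Yp R n) (3 * monomial_degree m)" using gmon_PS[OF Smon_keys[OF m(1)]] m(2) by simp
    also have "\<dots> \<subseteq> PS (Yp R n) (3 * n ^ 4)" using Smon_degree[OF m(1)] by (intro PS_mono) simp
    finally show "g \<in> fv.span ?T" by (simp add: PS_def)
  qed
  have finT: "finite ?T" by (simp add: finite_PiE finite_Yp)
  have "fv.dependent ?G"
  proof (rule ccontr)
    assume ind: "\<not> fv.dependent ?G"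
    have "card ?G \<le> card ?T" using fv.independent_span_bound[OF finT ind sub] by simp
    also have "\<dots> \<le> (3 * n ^ 4 + 1) ^ (3 * R * n)" using card_T[OF finite_Yp, of R n "3 * n ^ 4"] by (simp add: card_Yp)
    also have "\<dots> < (n + 1) ^ (n ^ 3)" by (rule count_arith[OF assms])
    also have "\<dots> = card ?G" by (simp add: card_image[OF True] card_Smon)
    finally show False by simp
  qed
  then obtain u where u: "\<exists>v\<in>?G. u v \<noteq> 0" "(\<Sum>v\<in>?G. fscale (u v) v) = 0"
    using fv.dependent_finite[of ?G] finite_Smon by auto
  show ?thesis
  proof (intro exI conjI allI)
    show "\<exists>m\<in>Smon n. u (gmon R m) \<noteq> 0" using u(1) by auto
    fix p
    have "(\<Sum>m\<in>Smon n. u (gmon R m) * gmon R m p) = (\<Sum>v\<in>?G. fscale (u v) v) p"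
      by (simp add: fsum_apply fscale_def sum.reindex[OF True])
    also have "\<dots> = 0" using u(2) by simp
    finally show "(\<Sum>m\<in>Smon n. u (gmon R m) * gmon R m p) = 0" .
  qed
next
  case False
  then obtain m1 m2 where m: "m1 \<in> Smon n" "m2 \<in> Smon n" "m1 \<noteq> m2"
    "(gmon R m1 :: _ \<Rightarrow> 'a) = gmon R m2"
    unfolding inj_on_def by blast
  define c :: "_ \<Rightarrow> 'a" where "c = (\<lambda>m. if m = m1 then 1 else if m = m2 then -1 else 0)"
  show ?thesis
  proof (intro exI conjI allI)
    show "\<exists>m\<in>Smon n. c m \<noteq> 0" using m(1) by (auto simp: c_def)
    fix p
    have "(\<Sum>m\<in>Smon n. c m * gmon R m p) = (\<Sum>m\<in>{m1, m2}. c m * gmon R m p)"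
      by (rule sum.mono_neutral_right) (use m finite_Smon in \<open>auto simp: c_def\<close>)
    also have "\<dots> = 0" using m by (simp add: c_def)
    finally show "(\<Sum>m\<in>Smon n. c m * gmon R m p) = 0" .
  qed
qed

theorem theorem4p2:
  fixes n :: nat
  assumes "n \<ge> 1"
  shows "\<exists>Q :: 'a::field tpoly. Q \<noteq> 0 \<and> tpoly_in_vars n Q \<and> tpoly_degree Q \<le> n ^ 4 \<and>
           (\<forall>\<tau> :: nat \<times> nat \<times> nat \<Rightarrow> 'a. real (tensor_rank n \<tau>) \<le> real n ^ 2 / 300
              \<longrightarrow> tpoly_eval Q \<tau> = 0)"
proof -
  define R where "R = n ^ 2 div 300"
  have R: "300 * R \<le> n ^ 2" unfolding R_def by simp
  obtain c :: "_ \<Rightarrow> 'a" where c: "\<exists>m\<in>Smon n. c m \<noteq> 0" "\<And>p. (\<Sum>m\<in>Smon n. c m * gmon R m p) = 0"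
    using exists_relation[OF assms R] by blast
  define cc where "cc = (\<lambda>m. if m \<in> Smon n then c m else 0)"
  define Q :: "'a tpoly" where "Q = Abs_poly_mapping cc"
  have fin: "finite {m. cc m \<noteq> 0}"
    by (rule finite_subset[OF _ finite_Smon[of n]]) (auto simp: cc_def split: if_splits)
  have lQ: "Poly_Mapping.lookup Q = cc" unfolding Q_def using fin by simp
  have kQ: "Poly_Mapping.keys Q \<subseteq> Smon n"
    by (auto simp: in_keys_iff lQ cc_def split: if_splits)
  show ?thesis
  proof (intro exI conjI allI impI)
    show "Q \<noteq> 0"
    proof
      assume "Q = 0"
      then have "cc = (\<lambda>_. 0)" using lQ by (metis lookup_zero)
      then show False using c(1) unfolding cc_def fun_eq_iff by metis
    qed
    show "tpoly_in_vars n Q"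
      unfolding tpoly_in_vars_def using kQ Smon_keys by blast
    show "tpoly_degree Q \<le> n ^ 4"
      unfolding tpoly_degree_def using kQ Smon_degree by (auto simp: Max_le_iff)
    fix \<tau> :: "nat \<times> nat \<times> nat \<Rightarrow> 'a"
    assume rk: "real (tensor_rank n \<tau>) \<le> real n ^ 2 / 300"
    have "300 * tensor_rank n \<tau> \<le> n ^ 2"
    proof -
      have "real (300 * tensor_rank n \<tau>) \<le> real (n ^ 2)" using rk by simp
      then show ?thesis by linarith
    qed
    then have "tensor_rank n \<tau> \<le> R" unfolding R_def by (simp add: less_eq_div_iff_mult_less_eq mult.commute)
    then obtain p where p: "\<forall>x\<in>cube n. \<tau> x = Phi R p x" using rank_params by blast
    have "tpoly_eval Q \<tau> = (\<Sum>m\<in>Poly_Mapping.keys Q. cc m * (\<Prod>x\<in>Poly_Mapping.keys m. \<tau> x ^ Poly_Mapping.lookup m x))"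
      by (simp add: tpoly_eval_def lQ)
    also have "\<dots> = (\<Sum>m\<in>Smon n. cc m * (\<Prod>x\<in>Poly_Mapping.keys m. \<tau> x ^ Poly_Mapping.lookup m x))"
      by (rule sum.mono_neutral_left[OF finite_Smon kQ]) (auto simp: in_keys_iff lQ)
    also have "\<dots> = (\<Sum>m\<in>Smon n. c m * gmon R m p)"
    proof (rule sum.cong[OF refl])
      fix m assume m: "m \<in> Smon n"
      have "(\<Prod>x\<in>Poly_Mapping.keys m. \<tau> x ^ Poly_Mapping.lookup m x) = gmon R m p"
        unfolding gmon_def using p Smon_keys[OF m] by (auto intro!: prod.cong)
      then show "cc m * (\<Prod>x\<in>Poly_Mapping.keys m. \<tau> x ^ Poly_Mapping.lookup m x) = c m * gmon R m p"
        using m by (simp add: cc_def)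
    qed
    also have "\<dots> = 0" by (rule c(2))
    finally show "tpoly_eval Q \<tau> = 0" .
  qed
qed

end
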